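(* Let $\mathbf A\in\mathbb R^{n\times p}$ with columns $\mathbf a_1,\dots,\mathbf a_p$, let $\mathbf y\in\mathbb R^n$, let $\mathbf w$ be a weight vector as in the context and $\Delta:=\min\{w_l-w_{l+1}: l=1,\dots,p-1\}$. Let $\widehat{\mathbf x}$ be any minimizer of $$\|\mathbf A\mathbf x-\mathbf y\|_1+\Omega_{\mathbf w}(\mathbf x)$$ over $\mathbf x\in\mathbb R^p$. Then for every pair of columns $(i,j)$ for which $\|\operatorname{sign}(\widehat x_i)\mathbf a_i-\operatorname{sign}(\widehat x_j)\mathbf a_j\|_1<\Delta$, we have $|\widehat x_i|=|\widehat x_j|$.
   Context: $\mathbf w=(w_1,\dots,w_p)\in\mathbb R^p_+$ satisfies $w_1\ge w_2\ge\cdots\ge w_p\ge0$ and $w_1>0$. The ordered weighted $\ell_1$ (OWL) norm is $\Omega_{\mathbf w}(\mathbf x)=\sum_{i=1}^p w_i|x|_{[i]}$, where $|x|_{[i]}$ denotes the $i$-th largest component of $\mathbf x$ in magnitude. $\operatorname{sign}$ denotes the sign function. *)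

theory Defs
  imports Complex_Main
begin

text \<open>Vectors in R^p are represented as functions nat => real, with only the
  indices 0..p-1 relevant; matrices in R^{n x p} as nat => nat => real
  (entry A r k, row r < n, column k < p). Indices are 0-based.\<close>

definition l1norm :: "nat \<Rightarrow> (nat \<Rightarrow> real) \<Rightarrow> real" where
  "l1norm n v = (\<Sum>r<n. \<bar>v r\<bar>)"

definition matvec :: "nat \<Rightarrow> (nat \<Rightarrow> nat \<Rightarrow> real) \<Rightarrow> (nat \<Rightarrow> real) \<Rightarrow> (nat \<Rightarrow> real)" where
  "matvec p A x = (\<lambda>r. \<Sum>k<p. A r k * x k)"

text \<open>i-th largest magnitude (0-based): |x|_[i+1] in the paper's notation.\<close>
definition sorted_mag :: "nat \<Rightarrow> (nat \<Rightarrow> real) \<Rightarrow> nat \<Rightarrow> real" where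
  "sorted_mag p x i = rev (sort (map (\<lambda>k. \<bar>x k\<bar>) [0..<p])) ! i"

definition owl :: "nat \<Rightarrow> (nat \<Rightarrow> real) \<Rightarrow> (nat \<Rightarrow> real) \<Rightarrow> real" where
  "owl p w x = (\<Sum>i<p. w i * sorted_mag p x i)"

definition owl_weight :: "nat \<Rightarrow> (nat \<Rightarrow> real) \<Rightarrow> bool" where
  "owl_weight p w \<longleftrightarrow> 0 < p \<and> (\<forall>i j. i \<le> j \<longrightarrow> j < p \<longrightarrow> w j \<le> w i)
      \<and> 0 \<le> w (p - 1) \<and> 0 < w 0"

definition owl_gap :: "nat \<Rightarrow> (nat \<Rightarrow> real) \<Rightarrow> real" where
  "owl_gap p w = Min {w l - w (l + 1) | l. l + 1 < p}"

definition lad_owl_obj :: "nat \<Rightarrow> nat \<Rightarrow> (nat \<Rightarrow> nat \<Rightarrow> real) \<Rightarrow> (nat \<Rightarrow> real)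
    \<Rightarrow> (nat \<Rightarrow> real) \<Rightarrow> (nat \<Rightarrow> real) \<Rightarrow> real" where
  "lad_owl_obj n p A y w x = l1norm n (\<lambda>r. matvec p A x r - y r) + owl p w x"

end

theory Submission
  imports Defs "HOL-Combinatorics.List_Permutation"
begin

lemma sorted_mag_perm:
  fixes p :: nat and x :: "nat \<Rightarrow> real"
  assumes bij: "bij_betw \<sigma> {..<p} {..<p}"
    and mono: "\<forall>a b. a \<le> b \<longrightarrow> b < p \<longrightarrow> \<bar>x (\<sigma> b)\<bar> \<le> \<bar>x (\<sigma> a)\<bar>"
    and k: "k < p"
  shows "sorted_mag p x k = \<bar>x (\<sigma> k)\<bar>"
proof -
  define L where "L = map (\<lambda>k. \<bar>x k\<bar>) [0..<p]"
  define ys where "ys = map (\<lambda>k. \<bar>x (\<sigma> k)\<bar>) [0..<p]"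
  have inj: "inj_on \<sigma> {..<p}" and im: "\<sigma> ` {..<p} = {..<p}"
    using bij by (auto simp: bij_betw_def)
  have "mset ys = image_mset (\<lambda>k. \<bar>x k\<bar>) (image_mset \<sigma> (mset_set {..<p}))"
    by (simp add: ys_def atLeast0LessThan image_mset.compositionality o_def)
  also have "\<dots> = mset L"
    using image_mset_mset_set[OF inj] im by (simp add: L_def atLeast0LessThan)
  finally have ms: "mset (rev ys) = mset L" by simp
  have srt: "sorted (rev ys)"
    unfolding sorted_iff_nth_mono
    using mono by (auto simp: ys_def rev_nth)
  have "sort L = rev ys" using properties_for_sort[OF ms srt] .
  then show ?thesis using k by (simp add: sorted_mag_def L_def[symmetric] ys_def)
qed

lemma sorted_mag_ex:
  fixes p :: nat and x :: "nat \<Rightarrow> real"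
  shows   "\<exists>\<sigma>. bij_betw \<sigma> {..<p} {..<p} \<and> (\<forall>a b. a \<le> b \<longrightarrow> b < p \<longrightarrow> \<bar>x (\<sigma> b)\<bar> \<le> \<bar>x (\<sigma> a)\<bar>)"
proof -
  define L where "L = map (\<lambda>k. \<bar>x k\<bar>) [0..<p]"
  have "mset (rev (sort L)) = mset L" by simp
  from permutation_Ex_bij[OF this] obtain f where
    f: "bij_betw f {..<p} {..<p}" "\<forall>i<p. rev (sort L) ! i = L ! (f i)"
    by (auto simp: L_def)
  have fl: "f i < p" if "i < p" for i using f(1) that by (auto simp: bij_betw_def)
  have s: "sorted (sort L)" by simp
  have "\<bar>x (f b)\<bar> \<le> \<bar>x (f a)\<bar>" if "a \<le> b" "b < p" for a b
  proof -
    have "rev (sort L) ! b \<le> rev (sort L) ! a"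
      using s that unfolding sorted_iff_nth_mono by (auto simp: rev_nth L_def)
    then show ?thesis using f(2) that fl[of a] fl[of b] by (simp add: L_def)
  qed
  then show ?thesis using f(1) by blast
qed

lemma main_lemma:
  fixes n p :: nat and A :: "nat \<Rightarrow> nat \<Rightarrow> real" and y w x :: "nat \<Rightarrow> real"
  assumes W: "owl_weight p w"
    and opt: "\<forall>z. lad_owl_obj n p A y w x \<le> lad_owl_obj n p A y w z"
    and ip: "i < p" and jp: "j < p"
    and L: "l1norm n (\<lambda>r. sgn (x i) * A r i - sgn (x j) * A r j) < owl_gap p w"
    and lt: "\<bar>x j\<bar> < \<bar>x i\<bar>"
  shows False
proof -
  define m where "m = (\<lambda>k. \<bar>x k\<bar>)"
  define si where "si = sgn (x i)"
  define sj where "sj = sgn (x j)"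
  have ij: "i \<noteq> j" using lt by auto
  define D where "D = {m v - m u | u v. u < p \<and> v < p \<and> m u < m v}"
  have finD: "finite D"
  proof -
    have "D \<subseteq> (\<lambda>(u,v). m v - m u) ` ({..<p} \<times> {..<p})" by (auto simp: D_def)
    then show ?thesis by (rule finite_subset) auto
  qed
  have ijD: "m i - m j \<in> D" using ip jp lt by (auto simp: D_def m_def)
  define \<delta> where "\<delta> = Min D"
  have dpos: "\<delta> > 0"
    unfolding \<delta>_def using finD ijD by (subst Min_gr_iff) (auto simp: D_def)
  have dle: "\<delta> \<le> m v - m u" if "u < p" "v < p" "m u < m v" for u v
    unfolding \<delta>_def using finD that by (intro Min_le) (auto simp: D_def)
  define \<epsilon> where "\<epsilon> = \<delta> / 4"
  have epos: "\<epsilon> > 0" using dpos by (simp add: \<epsilon>_def)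
  have eij: "4 * \<epsilon> \<le> m i - m j" using dle[OF jp ip] lt by (simp add: \<epsilon>_def m_def)
  define x' where "x' = (\<lambda>k. x k + \<epsilon> * ((if k = j then sj else 0) - (if k = i then si else 0)))"
  define m' where "m' = (\<lambda>k. \<bar>x' k\<bar>)"
  have mj0: "m j \<ge> 0" by (simp add: m_def)
  have m'i: "m' i = m i - \<epsilon>"
  proof -
    have "x i > 0 \<or> x i < 0" using lt by auto
    then show ?thesis using ij eij mj0 epos
      by (auto simp: m'_def x'_def si_def m_def)
  qed
  have m'j: "m' j = m j + \<epsilon> * \<bar>sj\<bar>"
  proof -
    have "x j > 0 \<or> x j < 0 \<or> x j = 0" by auto
    then show ?thesis using ij epos
      by (auto simp: m'_def x'_def sj_def m_def)
  qed
  have m'o: "m' k = m k" if "k \<noteq> i" "k \<noteq> j" for k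
    using that by (simp add: m'_def x'_def m_def)
  have sjb: "\<bar>sj\<bar> \<le> 1" by (simp add: sj_def abs_sgn_eq)
  have close: "\<bar>m' k - m k\<bar> \<le> \<epsilon>" for k
  proof (cases "k = i")
    case True then show ?thesis using m'i epos by simp
  next
    case False
    show ?thesis
    proof (cases "k = j")
      case True then show ?thesis using m'j epos sjb
        by (simp add: abs_mult mult_le_cancel_left1)
    next
      case False then show ?thesis using m'o \<open>k \<noteq> i\<close> epos by simp
    qed
  qed
  have transf: "m' u < m' v" if "u < p" "v < p" "m u < m v" for u v
  proof -
    have "\<delta> \<le> m v - m u" using dle that by blast
    then show ?thesis using close[of u] close[of v] epos unfolding \<epsilon>_def by linarith
  qed
  obtain \<sigma> where bij: "bij_betw \<sigma> {..<p} {..<p}"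
    and mono': "\<forall>a b. a \<le> b \<longrightarrow> b < p \<longrightarrow> \<bar>x' (\<sigma> b)\<bar> \<le> \<bar>x' (\<sigma> a)\<bar>"
    using sorted_mag_ex[of p x'] by blast
  have sp: "\<sigma> k < p" if "k < p" for k using bij that by (auto simp: bij_betw_def)
  have mono: "\<forall>a b. a \<le> b \<longrightarrow> b < p \<longrightarrow> \<bar>x (\<sigma> b)\<bar> \<le> \<bar>x (\<sigma> a)\<bar>"
  proof (intro allI impI)
    fix a b :: nat assume ab: "a \<le> b" "b < p"
    show "\<bar>x (\<sigma> b)\<bar> \<le> \<bar>x (\<sigma> a)\<bar>"
    proof (rule ccontr)
      assume "\<not> ?thesis"
      then have "m (\<sigma> a) < m (\<sigma> b)" by (simp add: m_def)
      then have "m' (\<sigma> a) < m' (\<sigma> b)" using transf sp ab by simp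
      moreover have "\<bar>x' (\<sigma> b)\<bar> \<le> \<bar>x' (\<sigma> a)\<bar>" using mono'[rule_format, OF ab] .
      ultimately show False by (simp add: m'_def)
    qed
  qed
  have owlx: "owl p w x = (\<Sum>k<p. w k * m (\<sigma> k))"
    unfolding owl_def m_def using sorted_mag_perm[OF bij mono] by simp
  have owlx': "owl p w x' = (\<Sum>k<p. w k * m' (\<sigma> k))"
    unfolding owl_def m'_def using sorted_mag_perm[OF bij mono'] by simp
  obtain a where a: "a < p" "\<sigma> a = i" using bij ip unfolding bij_betw_def by (metis imageE lessThan_iff)
  obtain b where b: "b < p" "\<sigma> b = j" using bij jp unfolding bij_betw_def by (metis imageE lessThan_iff)
  have inj: "inj_on \<sigma> {..<p}" using bij by (auto simp: bij_betw_def)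
  have ab: "a < b"
  proof (rule ccontr)
    assume "\<not> a < b"
    then have "b \<le> a" by simp
    have "\<bar>x' (\<sigma> a)\<bar> \<le> \<bar>x' (\<sigma> b)\<bar>" using mono'[rule_format, OF \<open>b \<le> a\<close> a(1)] .
    then have "m' i \<le> m' j" using a b by (simp add: m'_def)
    moreover have "\<epsilon> * \<bar>sj\<bar> \<le> \<epsilon>" using epos sjb by (simp add: mult_le_cancel_left1)
    ultimately show False using m'i m'j eij epos by linarith
  qed
  have "owl p w x - owl p w x' = (\<Sum>k<p. w k * (m (\<sigma> k) - m' (\<sigma> k)))"
    unfolding owlx owlx' by (simp add: sum_subtractf algebra_simps)
  also have "\<dots> = (\<Sum>k\<in>{a,b}. w k * (m (\<sigma> k) - m' (\<sigma> k)))"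
  proof (rule sum.mono_neutral_right)
    show "\<forall>k\<in>{..<p} - {a, b}. w k * (m (\<sigma> k) - m' (\<sigma> k)) = 0"
    proof
      fix k assume k: "k \<in> {..<p} - {a, b}"
      then have "\<sigma> k \<noteq> i" "\<sigma> k \<noteq> j" using inj a b
        by (auto dest: inj_onD)
      then show "w k * (m (\<sigma> k) - m' (\<sigma> k)) = 0" using m'o by simp
    qed
  qed (use a b in auto)
  also have "\<dots> = w a * \<epsilon> - w b * (\<epsilon> * \<bar>sj\<bar>)"
    using ab a b by (simp add: m'i m'j algebra_simps)
  finally have owld: "owl p w x - owl p w x' = w a * \<epsilon> - w b * (\<epsilon> * \<bar>sj\<bar>)" .
  have wmono: "w j' \<le> w i'" if "i' \<le> j'" "j' < p" for i' j'
    using W that by (auto simp: owl_weight_def)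
  have wb0: "w b \<ge> 0"
  proof -
    have "w (p - 1) \<le> w b" using wmono[of b "p - 1"] b by simp
    moreover have "0 \<le> w (p - 1)" using W by (simp add: owl_weight_def)
    ultimately show ?thesis by linarith
  qed
  have gapfin: "finite {w l - w (l + 1) | l. l + 1 < p}"
  proof -
    have "{w l - w (l + 1) | l. l + 1 < p} = (\<lambda>l. w l - w (l + 1)) ` {..<p - 1}" by auto
    then show ?thesis by simp
  qed
  have gap: "owl_gap p w \<le> w a - w (a + 1)"
    unfolding owl_gap_def using ab b gapfin by (intro Min_le) auto
  have "w b \<le> w (a + 1)" using ab b wmono by simp
  then have gap2: "owl_gap p w \<le> w a - w b" using gap by simp
  have "w b * (\<epsilon> * \<bar>sj\<bar>) \<le> w b * \<epsilon>"
    using wb0 epos sjb by (simp add: mult_left_mono mult_le_cancel_left1)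
  moreover have "\<epsilon> * owl_gap p w \<le> \<epsilon> * (w a - w b)"
    using gap2 epos by (simp add: mult_left_mono)
  ultimately have owlgain: "owl p w x' \<le> owl p w x - \<epsilon> * owl_gap p w"
    using owld by (simp add: algebra_simps)
  define d where "d = (\<lambda>r. si * A r i - sj * A r j)"
  have mv: "matvec p A x' r = matvec p A x r - \<epsilon> * d r" for r
  proof -
    define cj where "cj = (\<lambda>k::nat. if k = j then sj else 0)"
    define ci where "ci = (\<lambda>k::nat. if k = i then si else 0)"
    have x'e: "x' = (\<lambda>k. x k + \<epsilon> * (cj k - ci k))"
      unfolding x'_def cj_def ci_def by simp
    have "matvec p A x' r = (\<Sum>k<p. A r k * x k + \<epsilon> * (A r k * cj k) - \<epsilon> * (A r k * ci k))"
      unfolding matvec_def x'e by (intro sum.cong refl) (simp add: ring_distribs)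
    also have "\<dots> = matvec p A x r + \<epsilon> * (\<Sum>k<p. A r k * cj k) - \<epsilon> * (\<Sum>k<p. A r k * ci k)"
      unfolding matvec_def by (simp add: sum.distrib sum_subtractf sum_distrib_left)
    also have "(\<Sum>k<p. A r k * cj k) = (\<Sum>k<p. if k = j then A r j * sj else 0)"
      unfolding cj_def by (intro sum.cong refl) simp
    also have "\<dots> = A r j * sj" using jp by simp
    also have "(\<Sum>k<p. A r k * ci k) = (\<Sum>k<p. if k = i then A r i * si else 0)"
      unfolding ci_def by (intro sum.cong refl) simp
    also have "\<dots> = A r i * si" using ip by simp
    finally show ?thesis by (simp add: d_def algebra_simps)
  qed
  have loss: "l1norm n (\<lambda>r. matvec p A x' r - y r)
      \<le> l1norm n (\<lambda>r. matvec p A x r - y r) + \<epsilon> * l1norm n d"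
  proof -
    have "l1norm n (\<lambda>r. matvec p A x' r - y r) = (\<Sum>r<n. \<bar>(matvec p A x r - y r) - \<epsilon> * d r\<bar>)"
      unfolding l1norm_def mv by (simp add: algebra_simps)
    also have "\<dots> \<le> (\<Sum>r<n. \<bar>matvec p A x r - y r\<bar> + \<epsilon> * \<bar>d r\<bar>)"
      using epos by (intro sum_mono) (metis abs_mult abs_of_pos abs_triangle_ineq4)
    finally show ?thesis by (simp add: l1norm_def sum.distrib sum_distrib_left)
  qed
  have "l1norm n d < owl_gap p w" using L by (simp add: d_def si_def sj_def)
  then have "\<epsilon> * l1norm n d < \<epsilon> * owl_gap p w" using epos by simp
  then have "lad_owl_obj n p A y w x' < lad_owl_obj n p A y w x"
    using loss owlgain by (simp add: lad_owl_obj_def)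
  then show False using opt by (meson not_le)
qed


theorem theorem3:
  fixes n p :: nat and A :: "nat \<Rightarrow> nat \<Rightarrow> real" and y w xhat :: "nat \<Rightarrow> real"
  assumes "owl_weight p w"
    and "\<forall>x. lad_owl_obj n p A y w xhat \<le> lad_owl_obj n p A y w x"
    and "i < p" and "j < p"
    and "l1norm n (\<lambda>r. sgn (xhat i) * A r i - sgn (xhat j) * A r j) < owl_gap p w"
  shows "\<bar>xhat i\<bar> = \<bar>xhat j\<bar>"
proof (rule ccontr)
  assume ne: "\<bar>xhat i\<bar> \<noteq> \<bar>xhat j\<bar>"
  have sw: "l1norm n (\<lambda>r. sgn (xhat j) * A r j - sgn (xhat i) * A r i)
      = l1norm n (\<lambda>r. sgn (xhat i) * A r i - sgn (xhat j) * A r j)"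
    unfolding l1norm_def by (intro sum.cong refl) (simp add: abs_minus_commute)
  show False
  proof (cases "\<bar>xhat j\<bar> < \<bar>xhat i\<bar>")
    case True
    show False by (rule main_lemma[OF assms True])
  next
    case False
    then have lt: "\<bar>xhat i\<bar> < \<bar>xhat j\<bar>" using ne by linarith
    show False by (rule main_lemma[OF assms(1,2,4,3) _ lt]) (use assms(5) sw in simp)
  qed
qed

end
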